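(* Let $G$ be a subgroup of $\mathrm{Sp}(n,1)$ containing $d_n=\mathrm{diag}(1,\dots,1,i)$. Then for every $g\in\mathrm{Sp}(n,1)$, the set of traces of the elements of $gGg^{-1}$ is not contained in $\mathbb R$.
   Context: $\mathbb H$ denotes the quaternions, with units $i,j,k$. $\mathrm{Sp}(n,1)=\{A\in\mathrm{GL}(n+1,\mathbb H): A^*I_{n,1}A=I_{n,1}\}$ with $A^*$ the conjugate transpose and $I_{n,1}=\mathrm{diag}(1,\dots,1,-1)$. $d_n$ is the $(n+1)\times(n+1)$ diagonal matrix with diagonal entries $1,\dots,1,i$ (in this order). The trace of a quaternionic matrix is the sum of its diagonal entries. *)

theory Defs
  imports Main "HOL.Real"
begin

datatype quat = Quat (Re: real) (Im1: real) (Im2: real) (Im3: real)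

lemma quat_eq_iff: "x = y \<longleftrightarrow> Re x = Re y \<and> Im1 x = Im1 y \<and> Im2 x = Im2 y \<and> Im3 x = Im3 y"
  by (cases x; cases y) auto

instantiation quat :: ring_1
begin
definition "0 = Quat 0 0 0 0"
definition "1 = Quat 1 0 0 0"
definition "x + y = Quat (Re x + Re y) (Im1 x + Im1 y) (Im2 x + Im2 y) (Im3 x + Im3 y)"
definition "x - y = Quat (Re x - Re y) (Im1 x - Im1 y) (Im2 x - Im2 y) (Im3 x - Im3 y)"
definition "- x = Quat (- Re x) (- Im1 x) (- Im2 x) (- Im3 x)"
definition "x * y = Quat
   (Re x * Re y - Im1 x * Im1 y - Im2 x * Im2 y - Im3 x * Im3 y)
   (Re x * Im1 y + Im1 x * Re y + Im2 x * Im3 y - Im3 x * Im2 y)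
   (Re x * Im2 y - Im1 x * Im3 y + Im2 x * Re y + Im3 x * Im1 y)
   (Re x * Im3 y + Im1 x * Im2 y - Im2 x * Im1 y + Im3 x * Re y)"
instance
  by standard (simp_all add: quat_eq_iff zero_quat_def one_quat_def plus_quat_def
      minus_quat_def uminus_quat_def times_quat_def algebra_simps)
end

definition qi :: quat where "qi = Quat 0 1 0 0"
definition qj :: quat where "qj = Quat 0 0 1 0"
definition qk :: quat where "qk = Quat 0 0 0 1"
definition qcnj :: "quat \<Rightarrow> quat" where
  "qcnj x = Quat (Re x) (- Im1 x) (- Im2 x) (- Im3 x)"
definition qreal :: "real \<Rightarrow> quat" where "qreal r = Quat r 0 0 0"

text \<open>A matrix of size (n+1) x (n+1) is a function on indices 0..n, zero outside.\<close>
type_synonym qmat = "nat \<Rightarrow> nat \<Rightarrow> quat"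

definition is_qmat :: "nat \<Rightarrow> qmat \<Rightarrow> bool" where
  "is_qmat n A \<longleftrightarrow> (\<forall>i j. (n < i \<or> n < j) \<longrightarrow> A i j = 0)"

definition qmat_mult :: "nat \<Rightarrow> qmat \<Rightarrow> qmat \<Rightarrow> qmat" where
  "qmat_mult n A B = (\<lambda>i j. if i \<le> n \<and> j \<le> n then (\<Sum>k\<le>n. A i k * B k j) else 0)"

definition qmat_id :: "nat \<Rightarrow> qmat" where
  "qmat_id n = (\<lambda>i j. if i = j \<and> i \<le> n then 1 else 0)"

definition qmat_star :: "nat \<Rightarrow> qmat \<Rightarrow> qmat" where
  "qmat_star n A = (\<lambda>i j. if i \<le> n \<and> j \<le> n then qcnj (A j i) else 0)"

definition qmat_trace :: "nat \<Rightarrow> qmat \<Rightarrow> quat" where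
  "qmat_trace n A = (\<Sum>i\<le>n. A i i)"

definition qmat_invertible :: "nat \<Rightarrow> qmat \<Rightarrow> bool" where
  "qmat_invertible n A \<longleftrightarrow> (\<exists>B. is_qmat n B \<and> qmat_mult n A B = qmat_id n \<and> qmat_mult n B A = qmat_id n)"

definition qmat_inv :: "nat \<Rightarrow> qmat \<Rightarrow> qmat" where
  "qmat_inv n A = (SOME B. is_qmat n B \<and> qmat_mult n A B = qmat_id n \<and> qmat_mult n B A = qmat_id n)"

definition I_n1 :: "nat \<Rightarrow> qmat" where
  "I_n1 n = (\<lambda>i j. if i = j \<and> i < n then 1 else if i = j \<and> i = n then -1 else 0)"

definition d_mat :: "nat \<Rightarrow> qmat" where
  "d_mat n = (\<lambda>i j. if i = j \<and> i < n then 1 else if i = j \<and> i = n then qi else 0)"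

definition Sp_n1 :: "nat \<Rightarrow> qmat set" where
  "Sp_n1 n = {A. is_qmat n A \<and> qmat_invertible n A \<and>
      qmat_mult n (qmat_star n A) (qmat_mult n (I_n1 n) A) = I_n1 n}"

definition is_subgroup_Sp :: "nat \<Rightarrow> qmat set \<Rightarrow> bool" where
  "is_subgroup_Sp n G \<longleftrightarrow> G \<subseteq> Sp_n1 n \<and> qmat_id n \<in> G \<and>
     (\<forall>A\<in>G. \<forall>B\<in>G. qmat_mult n A B \<in> G) \<and> (\<forall>A\<in>G. qmat_inv n A \<in> G)"

definition qconj_set :: "nat \<Rightarrow> qmat \<Rightarrow> qmat set \<Rightarrow> qmat set" where
  "qconj_set n g G = (\<lambda>h. qmat_mult n (qmat_mult n g h) (qmat_inv n g)) ` G"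

end

theory Submission
  imports Defs
begin

lemmas qdefs = zero_quat_def one_quat_def plus_quat_def minus_quat_def uminus_quat_def times_quat_def qcnj_def qreal_def qi_def

definition nsq :: "quat \<Rightarrow> real" where
  "nsq q = (Re q)^2 + (Im1 q)^2 + (Im2 q)^2 + (Im3 q)^2"

lemma Re_sum: "Re (sum f A) = (\<Sum>x\<in>A. Re (f x))"
  by (induct A rule: infinite_finite_induct) (simp_all add: qdefs)
lemma Im1_sum: "Im1 (sum f A) = (\<Sum>x\<in>A. Im1 (f x))"
  by (induct A rule: infinite_finite_induct) (simp_all add: qdefs)

lemma qcnj_mult: "qcnj (x*y) = qcnj y * qcnj x"
  by (simp add: qdefs quat_eq_iff algebra_simps)

lemma qcnj_qcnj[simp]: "qcnj (qcnj x) = x"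
  by (simp add: qdefs quat_eq_iff)

lemma mult_qcnj: "x * qcnj x = qreal (nsq x)"
  by (simp add: qdefs nsq_def quat_eq_iff power2_eq_square)

lemma qreal_comm: "qreal a * x = x * qreal a"
  by (simp add: qdefs quat_eq_iff algebra_simps)

lemma Im1_qreal_conj: "Im1 (qcnj m * qreal a * m) = 0"
  by (simp add: qdefs quat_eq_iff algebra_simps)

lemma Re_qcnj_qreal: "Re (qreal a) = a" "Im1 (qreal a) = 0"
  by (simp_all add: qreal_def)

lemma nsq_mult: "nsq (x*y) = nsq x * nsq y"
  by (simp add: qdefs nsq_def power2_eq_square algebra_simps)

lemma nsq_qcnj: "nsq (qcnj x) = nsq x"
  by (simp add: qdefs nsq_def)

lemma Im1_pip: "Im1 (p * qi * qcnj p) = (Re p)^2 + (Im1 p)^2 - (Im2 p)^2 - (Im3 p)^2"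
  by (simp add: qdefs power2_eq_square algebra_simps)

lemma phi_bound: "Im1 (qcnj m * (q * qi * qcnj q) * m) \<le> nsq m * nsq q"
proof -
  define p where "p = qcnj m * q"
  have "qcnj m * (q * qi * qcnj q) * m = p * qi * qcnj p"
    by (simp add: p_def qcnj_mult mult.assoc)
  moreover have "nsq p = nsq m * nsq q" by (simp add: p_def nsq_mult nsq_qcnj)
  moreover have "(Re p)^2 + (Im1 p)^2 - (Im2 p)^2 - (Im3 p)^2 \<le> nsq p"
    by (simp add: nsq_def)
  ultimately show ?thesis by (simp add: Im1_pip)
qed

lemma phi_self: "Im1 (qcnj m * (m * qi * qcnj m) * m) = nsq m * nsq m"
proof -
  have "qcnj m * (m * qi * qcnj m) * m = (qcnj m * m) * qi * (qcnj m * m)"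
    by (simp add: mult.assoc)
  also have "qcnj m * m = qreal (nsq m)" using mult_qcnj[of "qcnj m"] by (simp add: nsq_qcnj)
  finally show ?thesis by (simp add: qdefs power2_eq_square)
qed

lemma qmat_assoc: "qmat_mult n (qmat_mult n A B) C = qmat_mult n A (qmat_mult n B C)"
proof (rule ext, rule ext)
  fix i j
  show "qmat_mult n (qmat_mult n A B) C i j = qmat_mult n A (qmat_mult n B C) i j"
  proof (cases "i \<le> n \<and> j \<le> n")
    case True
    have "qmat_mult n (qmat_mult n A B) C i j = (\<Sum>k\<le>n. (\<Sum>m\<le>n. A i m * B m k) * C k j)"
      using True unfolding qmat_mult_def by (auto intro!: sum.cong)
    also have "\<dots> = (\<Sum>k\<le>n. \<Sum>m\<le>n. A i m * (B m k * C k j))"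
      by (simp add: sum_distrib_right mult.assoc)
    also have "\<dots> = (\<Sum>m\<le>n. \<Sum>k\<le>n. A i m * (B m k * C k j))"
      by (rule sum.swap)
    also have "\<dots> = (\<Sum>m\<le>n. A i m * (\<Sum>k\<le>n. B m k * C k j))"
      by (simp add: sum_distrib_left)
    also have "\<dots> = qmat_mult n A (qmat_mult n B C) i j"
      using True unfolding qmat_mult_def by (auto intro!: sum.cong)
    finally show ?thesis .
  qed (auto simp: qmat_mult_def)
qed

lemma sum_single: "finite A \<Longrightarrow> j \<in> A \<Longrightarrow> (\<And>k. k \<in> A \<Longrightarrow> k \<noteq> j \<Longrightarrow> f k = 0) \<Longrightarrow> sum f A = f j"
  by (simp add: sum.remove sum.neutral)

lemma qmat_id_right: "is_qmat n A \<Longrightarrow> qmat_mult n A (qmat_id n) = A"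
proof (rule ext, rule ext)
  fix i j assume A: "is_qmat n A"
  show "qmat_mult n A (qmat_id n) i j = A i j"
  proof (cases "i \<le> n \<and> j \<le> n")
    case True
    have "(\<Sum>k\<le>n. A i k * qmat_id n k j) = A i j * qmat_id n j j"
      using True by (intro sum_single) (auto simp: qmat_id_def)
    then show ?thesis using True by (simp add: qmat_mult_def qmat_id_def)
  qed (use A in \<open>auto simp: qmat_mult_def is_qmat_def\<close>)
qed

lemma qmat_id_left: "is_qmat n A \<Longrightarrow> qmat_mult n (qmat_id n) A = A"
proof (rule ext, rule ext)
  fix i j assume A: "is_qmat n A"
  show "qmat_mult n (qmat_id n) A i j = A i j"
  proof (cases "i \<le> n \<and> j \<le> n")
    case True
    have "(\<Sum>k\<le>n. qmat_id n i k * A k j) = qmat_id n i i * A i j"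
      using True by (intro sum_single) (auto simp: qmat_id_def)
    then show ?thesis using True by (simp add: qmat_mult_def qmat_id_def)
  qed (use A in \<open>auto simp: qmat_mult_def is_qmat_def\<close>)
qed

lemma diag_right:
  assumes "\<And>a b. a \<noteq> b \<Longrightarrow> D a b = 0" "i \<le> n" "k \<le> n"
  shows "qmat_mult n A D i k = A i k * D k k"
proof -
  have "(\<Sum>m\<le>n. A i m * D m k) = A i k * D k k"
    using assms by (intro sum_single) auto
  then show ?thesis using assms by (simp add: qmat_mult_def)
qed

lemma diag_left:
  assumes "\<And>a b. a \<noteq> b \<Longrightarrow> D a b = 0" "i \<le> n" "k \<le> n"
  shows "qmat_mult n D A i k = D i i * A i k"
proof -
  have "(\<Sum>m\<le>n. D i m * A m k) = D i i * A i k"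
    using assms by (intro sum_single) auto
  then show ?thesis using assms by (simp add: qmat_mult_def)
qed

definition sr :: "nat \<Rightarrow> nat \<Rightarrow> real" where "sr n k = (if k < n then 1 else -1)"

lemma I_n1_diag: "k \<le> n \<Longrightarrow> I_n1 n k k = qreal (sr n k)"
  by (auto simp: I_n1_def sr_def qdefs)

definition Bx :: "nat \<Rightarrow> qmat \<Rightarrow> qmat" where
  "Bx n g = (\<lambda>j k. if j \<le> n \<and> k \<le> n then qreal (sr n j) * qcnj (g k j) * qreal (sr n k) else 0)"

lemma qreal_mult: "qreal a * qreal b = qreal (a*b)"
  by (simp add: qdefs)

lemma I_n1_offdiag: "a \<noteq> b \<Longrightarrow> I_n1 n a b = 0"
  by (simp add: I_n1_def)

lemma Sp_entry:
  assumes "g \<in> Sp_n1 n" "j \<le> n" "l \<le> n"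
  shows "(\<Sum>k\<le>n. qcnj (g k j) * (qreal (sr n k) * g k l)) = I_n1 n j l"
proof -
  have H: "qmat_mult n (qmat_star n g) (qmat_mult n (I_n1 n) g) j l = I_n1 n j l"
    using assms(1) by (simp add: Sp_n1_def)
  have "qmat_mult n (qmat_star n g) (qmat_mult n (I_n1 n) g) j l
      = (\<Sum>k\<le>n. qcnj (g k j) * (qreal (sr n k) * g k l))"
    using assms(2,3) unfolding qmat_mult_def[of n "qmat_star n g"]
    by (auto intro!: sum.cong simp: qmat_star_def diag_left[OF I_n1_offdiag] I_n1_diag)
  with H show ?thesis by simp
qed

lemma Bx_left_inv:
  assumes "g \<in> Sp_n1 n"
  shows "qmat_mult n (Bx n g) g = qmat_id n"
proof (rule ext, rule ext)
  fix j l
  show "qmat_mult n (Bx n g) g j l = qmat_id n j l"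
  proof (cases "j \<le> n \<and> l \<le> n")
    case True
    have "qmat_mult n (Bx n g) g j l = (\<Sum>k\<le>n. qreal (sr n j) * (qcnj (g k j) * (qreal (sr n k) * g k l)))"
      using True unfolding qmat_mult_def Bx_def by (auto intro!: sum.cong simp: mult.assoc)
    also have "\<dots> = qreal (sr n j) * I_n1 n j l"
      using Sp_entry[OF assms] True by (simp add: sum_distrib_left[symmetric])
    also have "\<dots> = qmat_id n j l"
      using True by (auto simp: I_n1_def qmat_id_def sr_def qdefs)
    finally show ?thesis .
  qed (auto simp: qmat_mult_def qmat_id_def)
qed

lemma Bx_qmat: "is_qmat n (Bx n g)"
  by (simp add: is_qmat_def Bx_def)

lemma inv_eq_Bx:
  assumes "g \<in> Sp_n1 n"
  shows "qmat_inv n g = Bx n g"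
proof -
  have "\<exists>B. is_qmat n B \<and> qmat_mult n g B = qmat_id n \<and> qmat_mult n B g = qmat_id n"
    using assms by (simp add: Sp_n1_def qmat_invertible_def)
  then have B: "is_qmat n (qmat_inv n g) \<and> qmat_mult n g (qmat_inv n g) = qmat_id n"
    unfolding qmat_inv_def by (metis (mono_tags, lifting) someI_ex)
  have "Bx n g = qmat_mult n (Bx n g) (qmat_mult n g (qmat_inv n g))"
    using B by (simp add: qmat_id_right Bx_qmat)
  also have "\<dots> = qmat_inv n g"
    unfolding qmat_assoc[symmetric] Bx_left_inv[OF assms] using B by (simp add: qmat_id_left)
  finally show ?thesis by simp
qed

lemma phi_scal: "Im1 (qcnj m * (x * qreal c) * m) = c * Im1 (qcnj m * x * m)"
  by (simp add: qdefs algebra_simps)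

lemma phi_sum: "Im1 (qcnj m * sum f A * m) = (\<Sum>x\<in>A. Im1 (qcnj m * f x * m))"
  by (simp add: sum_distrib_left sum_distrib_right Im1_sum)

lemma Re_col: "Re (qcnj q * (qreal s * q)) = s * nsq q"
  by (simp add: qdefs nsq_def power2_eq_square algebra_simps)

lemma sum_atMost_split: "(\<Sum>k\<le>n. f k) = (\<Sum>k<n. f k) + f (n::nat)"
  by (simp add: lessThan_Suc_atMost[symmetric])

lemma key:
  assumes g: "g \<in> Sp_n1 n"
  shows "Im1 (qcnj (g n n) * qmat_trace n (qmat_mult n (qmat_mult n g (d_mat n)) (Bx n g)) * g n n) > 0"
proof -
  define m where "m = g n n"
  define P where "P i = Im1 (qcnj m * (g i n * qi * qcnj (g i n)) * m)" for i
  define t where "t i k = g i k * d_mat n k k * Bx n g k i" for i k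
  have tr: "qmat_trace n (qmat_mult n (qmat_mult n g (d_mat n)) (Bx n g)) = (\<Sum>i\<le>n. \<Sum>k\<le>n. t i k)"
    unfolding qmat_trace_def t_def
  proof (rule sum.cong[OF refl])
    fix i assume i: "i \<in> {..n}"
    have dd: "\<And>a b. a \<noteq> b \<Longrightarrow> d_mat n a b = 0" by (simp add: d_mat_def)
    show "qmat_mult n (qmat_mult n g (d_mat n)) (Bx n g) i i = (\<Sum>k\<le>n. g i k * d_mat n k k * Bx n g k i)"
      using i unfolding qmat_mult_def[of n "qmat_mult n g (d_mat n)"]
      by (auto intro!: sum.cong simp: diag_right[OF dd])
  qed
  have t1: "Im1 (qcnj m * t i k * m) = 0" if "i \<le> n" "k < n" for i k
  proof -
    have "t i k = g i k * qcnj (g i k) * qreal (sr n i)"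
      using that by (simp add: t_def d_mat_def Bx_def sr_def qdefs mult.assoc)
    also have "\<dots> = qreal (nsq (g i k) * sr n i)" by (simp add: mult_qcnj qreal_mult)
    finally show ?thesis by (simp add: Im1_qreal_conj)
  qed
  have t2: "Im1 (qcnj m * t i n * m) = - sr n i * P i" if "i \<le> n" for i
  proof -
    have "t i n = (g i n * qi * qcnj (g i n)) * qreal (- sr n i)"
      using that by (simp add: t_def d_mat_def Bx_def sr_def qdefs quat_eq_iff algebra_simps)
    then show ?thesis by (simp add: phi_scal P_def)
  qed
  have "Im1 (qcnj m * (\<Sum>i\<le>n. \<Sum>k\<le>n. t i k) * m) = (\<Sum>i\<le>n. \<Sum>k\<le>n. Im1 (qcnj m * t i k * m))"
    by (simp add: phi_sum)
  also have "\<dots> = (\<Sum>i\<le>n. - sr n i * P i)"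
    by (rule sum.cong) (simp_all add: sum_atMost_split t1 t2)
  also have "\<dots> = (\<Sum>i<n. - P i) + P n"
    by (simp add: sum_atMost_split sr_def)
  finally have phiT: "Im1 (qcnj m * (\<Sum>i\<le>n. \<Sum>k\<le>n. t i k) * m) = (\<Sum>i<n. - P i) + P n" .
  have Pn: "P n = nsq m * nsq m" unfolding P_def m_def by (rule phi_self)
  have Pi: "- P i \<ge> - (nsq m * nsq (g i n))" for i unfolding P_def by (simp add: phi_bound)
  have col: "(\<Sum>k\<le>n. Re (qcnj (g k n) * (qreal (sr n k) * g k n))) = -1"
    using arg_cong[OF Sp_entry[OF g order.refl order.refl], of Re]
    by (simp add: Re_sum I_n1_def qdefs)
  hence col2: "(\<Sum>k<n. nsq (g k n)) - nsq m = -1"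
    by (simp add: Re_col sum_atMost_split sr_def m_def)
  have "(\<Sum>i<n. - P i) \<ge> (\<Sum>i<n. - (nsq m * nsq (g i n)))"
    by (rule sum_mono) (rule Pi)
  also have "(\<Sum>i<n. - (nsq m * nsq (g i n))) = - nsq m * (\<Sum>i<n. nsq (g i n))"
    by (simp add: sum_distrib_left sum_negf)
  finally have "(\<Sum>i<n. - P i) + P n \<ge> nsq m * (nsq m - (\<Sum>i<n. nsq (g i n)))"
    using Pn by (simp add: algebra_simps)
  also have "nsq m * (nsq m - (\<Sum>i<n. nsq (g i n))) = nsq m" using col2 by simp
  finally have "(\<Sum>i<n. - P i) + P n \<ge> nsq m" .
  moreover have "nsq m \<ge> 1" using col2 sum_nonneg[of "{..<n}" "\<lambda>k. nsq (g k n)"]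
    by (simp add: nsq_def)
  ultimately show ?thesis using phiT tr m_def by simp
qed

theorem proposition4p10:
  fixes n :: nat and G :: "qmat set"
  assumes "is_subgroup_Sp n G" and "d_mat n \<in> G"
  shows "\<forall>g\<in>Sp_n1 n. \<not> (qmat_trace n ` qconj_set n g G \<subseteq> range qreal)"
proof (intro ballI notI)
  fix g assume g: "g \<in> Sp_n1 n" and sub: "qmat_trace n ` qconj_set n g G \<subseteq> range qreal"
  have "qmat_mult n (qmat_mult n g (d_mat n)) (qmat_inv n g) \<in> qconj_set n g G"
    using assms(2) unfolding qconj_set_def by blast
  then have "qmat_trace n (qmat_mult n (qmat_mult n g (d_mat n)) (Bx n g)) \<in> range qreal"
    using sub inv_eq_Bx[OF g] by auto
  then obtain r where r: "qmat_trace n (qmat_mult n (qmat_mult n g (d_mat n)) (Bx n g)) = qreal r" by auto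
  show False using key[OF g] unfolding r by (simp add: Im1_qreal_conj)
qed

end
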